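(* Let $c_1,c_2\in\overline{C}_Q$ and $(z,\tau)\in D(c_1)\cap D(c_2)$. Then the series $$\theta^{c_1,c_2}(z;\tau)=\sum_{n\in\mathbb{Z}^r}\rho(n+a;\tau)e^{2\pi iQ(n)\tau+2\pi iB(n,z)},\qquad a=\operatorname{Im}(z)/\operatorname{Im}(\tau),$$ converges absolutely.
   Context: $A$ is a nondegenerate symmetric $r\times r$ matrix with integer entries, $Q(x)=\frac12\langle x,Ax\rangle$, $B(x,y)=\langle x,Ay\rangle$ (extended bilinearly to $\mathbb{C}^r$). $Q$ has type $(r-1,1)$: the largest dimension of a subspace of $\mathbb{R}^r$ on which $Q$ is negative definite is $1$. Fix $c_0\in\mathbb{R}^r$ with $Q(c_0)<0$ and put $C_Q=\{c\in\mathbb{R}^r:Q(c)<0,\ B(c,c_0)<0\}$, $S_Q=\{c\in\mathbb{Z}^r\text{ primitive}:Q(c)=0,\ B(c,c_0)<0\}$, $\overline{C}_Q=C_Q\cup S_Q$. For $c\in\overline C_Q$: $R(c)=\mathbb{R}^r$ if $c\in C_Q$ and $R(c)=\{a\in\mathbb{R}^r:B(c,a)\notin\mathbb{Z}\}$ if $c\in S_Q$; $D(c)=\{(z,\tau)\in\mathbb{C}^r\times\mathbb{H}:\operatorname{Im}(z)/\operatorname{Im}(\tau)\in R(c)\}$. With $y=\operatorname{Im}\tau$ and $E(z)=2\int_0^ze^{-\pi t^2}dt$, let $\rho^c(\nu;\tau)=E\big(\frac{B(c,\nu)}{\sqrt{-Q(c)}}y^{1/2}\big)$ if $c\in C_Q$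 and $\rho^c(\nu;\tau)=\operatorname{sign}(B(c,\nu))$ if $c\in S_Q$ (with $\operatorname{sign}(0)=0$), and $\rho=\rho^{c_1}-\rho^{c_2}$. *)

theory Defs
  imports "HOL-Analysis.Analysis"
begin

definition realmat :: "int^'n^'n \<Rightarrow> real^'n^'n" where
  "realmat A = (\<chi> i j. real_of_int (A$i$j))"

definition Bf :: "int^'n^'n \<Rightarrow> real^'n \<Rightarrow> real^'n \<Rightarrow> real" where
  "Bf A x y = x \<bullet> (realmat A *v y)"

definition Qf :: "int^'n^'n \<Rightarrow> real^'n \<Rightarrow> real" where
  "Qf A x = Bf A x x / 2"

text \<open>Bilinear (not sesquilinear) extension of B to complex vectors.\<close>
definition Bc :: "int^'n^'n \<Rightarrow> complex^'n \<Rightarrow> complex^'n \<Rightarrow> complex" where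
  "Bc A x y = (\<Sum>i\<in>UNIV. \<Sum>j\<in>UNIV. x$i * of_int (A$i$j) * y$j)"

definition neg_def_on :: "int^'n^'n \<Rightarrow> (real^'n) set \<Rightarrow> bool" where
  "neg_def_on A V \<longleftrightarrow> (\<forall>x\<in>V. x \<noteq> 0 \<longrightarrow> Qf A x < 0)"

text \<open>Q has type (r-1,1): the largest dimension of a subspace on which Q is
  negative definite is 1.\<close>
definition type_r1_1 :: "int^'n^'n \<Rightarrow> bool" where
  "type_r1_1 A \<longleftrightarrow>
     (\<exists>V. subspace V \<and> dim V = 1 \<and> neg_def_on A V) \<and>
     (\<forall>V. subspace V \<and> neg_def_on A V \<longrightarrow> dim V \<le> 1)"

definition int_vec :: "int^'n \<Rightarrow> real^'n" where
  "int_vec m = (\<chi> i. real_of_int (m$i))"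

definition primitive_int :: "real^'n \<Rightarrow> bool" where
  "primitive_int c \<longleftrightarrow> (\<exists>m::int^'n. c = int_vec m \<and>
       (\<forall>d::int. (\<forall>i. d dvd m$i) \<longrightarrow> is_unit d))"

definition CQ :: "int^'n^'n \<Rightarrow> real^'n \<Rightarrow> (real^'n) set" where
  "CQ A c0 = {c. Qf A c < 0 \<and> Bf A c c0 < 0}"

definition SQ :: "int^'n^'n \<Rightarrow> real^'n \<Rightarrow> (real^'n) set" where
  "SQ A c0 = {c. primitive_int c \<and> Qf A c = 0 \<and> Bf A c c0 < 0}"

definition CQbar :: "int^'n^'n \<Rightarrow> real^'n \<Rightarrow> (real^'n) set" where
  "CQbar A c0 = CQ A c0 \<union> SQ A c0"

definition Rset :: "int^'n^'n \<Rightarrow> real^'n \<Rightarrow> real^'n \<Rightarrow> (real^'n) set" where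
  "Rset A c0 c = (if c \<in> CQ A c0 then UNIV else {a. Bf A c a \<notin> \<int>})"

definition imquot :: "complex^'n \<Rightarrow> complex \<Rightarrow> real^'n" where
  "imquot z \<tau> = (\<chi> i. Im (z$i) / Im \<tau>)"

definition Dset :: "int^'n^'n \<Rightarrow> real^'n \<Rightarrow> real^'n \<Rightarrow> ((complex^'n) \<times> complex) set" where
  "Dset A c0 c = {(z,\<tau>). Im \<tau> > 0 \<and> imquot z \<tau> \<in> Rset A c0 c}"

definition Ef :: "real \<Rightarrow> real" where
  "Ef u = 2 * (if 0 \<le> u then integral {0..u} (\<lambda>t. exp (-pi * t^2))
               else - integral {u..0} (\<lambda>t. exp (-pi * t^2)))"

definition rho_c :: "int^'n^'n \<Rightarrow> real^'n \<Rightarrow> real^'n \<Rightarrow> real^'n \<Rightarrow> complex \<Rightarrow> real" where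
  "rho_c A c0 c \<nu> \<tau> =
     (if c \<in> CQ A c0 then Ef (Bf A c \<nu> / sqrt (- Qf A c) * sqrt (Im \<tau>))
      else sgn (Bf A c \<nu>))"

definition rho :: "int^'n^'n \<Rightarrow> real^'n \<Rightarrow> real^'n \<Rightarrow> real^'n \<Rightarrow> real^'n \<Rightarrow> complex \<Rightarrow> real" where
  "rho A c0 c1 c2 \<nu> \<tau> = rho_c A c0 c1 \<nu> \<tau> - rho_c A c0 c2 \<nu> \<tau>"

definition theta_term :: "int^'n^'n \<Rightarrow> real^'n \<Rightarrow> real^'n \<Rightarrow> real^'n \<Rightarrow> complex^'n \<Rightarrow> complex \<Rightarrow> int^'n \<Rightarrow> complex" where
  "theta_term A c0 c1 c2 z \<tau> n =
     of_real (rho A c0 c1 c2 (int_vec n + imquot z \<tau>) \<tau>) *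
     exp (2 * pi * \<i> * of_real (Qf A (int_vec n)) * \<tau>
          + 2 * pi * \<i> * Bc A (\<chi> i. of_int (n$i)) z)"

end

theory Submission
  imports Defs "HOL-Probability.Probability"
begin


lemma Bf_expand: "Bf A x y = (\<Sum>i\<in>UNIV. \<Sum>j\<in>UNIV. x$i * real_of_int (A$i$j) * y$j)"
  by (simp add: Bf_def inner_vec_def matrix_vector_mult_def realmat_def sum_distrib_left mult.assoc)

lemma Bf_add_left: "Bf A (x + y) z = Bf A x z + Bf A y z"
  by (simp add: Bf_def inner_add_left)
lemma Bf_add_right: "Bf A x (y + z) = Bf A x y + Bf A x z"
  by (simp add: Bf_def matrix_vector_right_distrib inner_add_right)
lemma Bf_scale_left: "Bf A (c *\<^sub>R x) z = c * Bf A x z"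
  by (simp add: Bf_def)
lemma Bf_scale_right: "Bf A x (c *\<^sub>R z) = c * Bf A x z"
  by (simp add: Bf_def matrix_vector_mult_scaleR)
lemma Bf_diff_left: "Bf A (x - y) z = Bf A x z - Bf A y z"
  by (simp add: Bf_def inner_diff_left)
lemma Bf_diff_right: "Bf A x (y - z) = Bf A x y - Bf A x z"
  by (simp add: Bf_def matrix_vector_mult_diff_distrib inner_diff_right)
lemma Bf_zero_left[simp]: "Bf A 0 z = 0" by (simp add: Bf_def)
lemma Bf_zero_right[simp]: "Bf A x 0 = 0" by (simp add: Bf_def)

lemma realmat_sym: assumes "transpose A = A" shows "transpose (realmat A) = realmat A"
proof -
  have s: "A$j$i = A$i$j" for i j using arg_cong[OF assms, of "\<lambda>M. M$i$j"] by (simp add: transpose_def)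
  show ?thesis unfolding transpose_def realmat_def vec_eq_iff using s by simp
qed

lemma Bf_sym: assumes "transpose A = A" shows "Bf A x y = Bf A y x"
proof -
  have "Bf A x y = (x v* realmat A) \<bullet> y" by (simp add: Bf_def dot_lmul_matrix)
  also have "\<dots> = (transpose (realmat A) *v x) \<bullet> y" by simp
  also have "\<dots> = Bf A y x" by (simp add: realmat_sym[OF assms] Bf_def inner_commute)
  finally show ?thesis .
qed

lemma Qf_comb: assumes "transpose A = A"
  shows "Qf A (s *\<^sub>R u + t *\<^sub>R v) = s^2 * Qf A u + s*t* Bf A u v + t^2 * Qf A v"
  using Bf_sym[OF assms, of v u]
  by (simp add: Qf_def Bf_add_left Bf_add_right Bf_scale_left Bf_scale_right power2_eq_square algebra_simps)

lemma Qf_add: assumes "transpose A = A"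
  shows "Qf A (u + v) = Qf A u + Bf A u v + Qf A v"
  using Qf_comb[OF assms, of 1 u 1 v] by simp

lemma Qf_scale: "Qf A (s *\<^sub>R u) = s^2 * Qf A u"
  by (simp add: Qf_def Bf_scale_left Bf_scale_right power2_eq_square)

lemma cont_Bf: "continuous_on S (\<lambda>y. Bf A x y)"
  unfolding Bf_expand by (intro continuous_intros)
lemma cont_Qf: "continuous_on S (\<lambda>y. Qf A y)"
  unfolding Qf_def Bf_expand by (intro continuous_intros) auto




lemma Qf_zero[simp]: "Qf A 0 = 0" by (simp add: Qf_def)

lemma span_pair: "x \<in> span {u, v} \<Longrightarrow> \<exists>s t. x = s *\<^sub>R u + t *\<^sub>R v"
proof -
  assume "x \<in> span {u, v}"
  then obtain s where "x - s *\<^sub>R u \<in> span {v}" by (auto simp: span_insert)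
  then obtain t where "x - s *\<^sub>R u = t *\<^sub>R v" by (auto simp: span_singleton)
  then show ?thesis by (metis add_diff_cancel_left' diff_add_cancel)
qed

lemma rev_CS:
  assumes sym: "transpose A = A" and ty: "type_r1_1 A" and u: "Qf A u < 0"
  shows "(Bf A u v)^2 \<ge> 4 * Qf A u * Qf A v"
proof (rule ccontr)
  assume "\<not> ?thesis"
  hence lt: "(Bf A u v)^2 < 4 * Qf A u * Qf A v" by simp
  define a where "a = Qf A u" define b where "b = Bf A u v" define c where "c = Qf A v"
  have a: "a < 0" using u a_def by simp
  have lt': "b^2 < 4*a*c" using lt a_def b_def c_def by simp
  have neg: "r^2*a + r*t*b + t^2*c < 0" if "r \<noteq> 0 \<or> t \<noteq> 0" for r t
  proof -
    have id: "4*a*(r^2*a + r*t*b + t^2*c) = (2*a*r + b*t)^2 + t^2*(4*a*c - b^2)"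
      by (simp add: power2_eq_square algebra_simps)
    have "(2*a*r + b*t)^2 + t^2*(4*a*c - b^2) > 0"
    proof (cases "t = 0")
      case True then have "r \<noteq> 0" using that by simp
      then show ?thesis using True a by simp
    next
      case False then show ?thesis using lt'
        by (metis add_nonneg_pos diff_gt_0_iff_gt mult_pos_pos zero_less_power2 zero_le_power2)
    qed
    with id have "4*a*(r^2*a + r*t*b + t^2*c) > 0" by simp
    with a show ?thesis by (simp add: zero_less_mult_iff)
  qed
  have u0: "u \<noteq> 0" using u by auto
  have vnot: "v \<notin> span {u}"
  proof
    assume "v \<in> span {u}"
    then obtain k where "v = k *\<^sub>R u" by (auto simp: span_singleton)
    hence "b = 2*k*a" "c = k^2*a"
      using b_def c_def a_def by (simp_all add: Qf_def Bf_scale_right, simp add: Qf_scale)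
    with lt' show False by (simp add: power2_eq_square algebra_simps)
  qed
  have ind: "independent {v, u}"
    using vnot u0 by (simp add: independent_insert)
  have uv: "u \<noteq> v" using vnot span_base[of v "{u}"] by auto
  have "dim (span {v, u}) = 2"
    using dim_span_eq_card_independent[OF ind] uv by simp
  moreover have nd: "neg_def_on A (span {v, u})"
    unfolding neg_def_on_def
  proof (intro ballI impI)
    fix x assume xs: "x \<in> span {v, u}" and "x \<noteq> 0"
    obtain s t where x: "x = s *\<^sub>R v + t *\<^sub>R u" using span_pair[OF xs] by blast
    with \<open>x \<noteq> 0\<close> have "t \<noteq> 0 \<or> s \<noteq> 0" by auto
    moreover have "x = t *\<^sub>R u + s *\<^sub>R v" using x by (simp add: add.commute)
    ultimately show "Qf A x < 0" using neg[of t s] Qf_comb[OF sym, of t u s v] a_def b_def c_def by simp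
  qed
  have le1: "dim (span {v, u}) \<le> 1"
    using ty subspace_span[of "{v,u}"] nd unfolding type_r1_1_def by blast
  ultimately show False using le1 by simp
qed

lemma det_realmat: "det (realmat A) = real_of_int (det A)"
  by (simp add: det_def realmat_def of_int_sum of_int_mult of_int_prod)

lemma nondeg:
  assumes "det A \<noteq> 0" and "\<And>x. Bf A w x = 0"
  shows "w = 0"
proof -
  have "invertible (realmat A)" using assms(1) by (simp add: invertible_det_nz det_realmat)
  then obtain M' where M': "realmat A ** M' = mat 1" by (auto simp: invertible_def)
  have "Bf A w (M' *v w) = w \<bullet> w"
    by (simp add: Bf_def matrix_vector_mul_assoc M')
  with assms(2) show ?thesis by simp
qed




lemma aux1: fixes a b c :: real assumes "a \<noteq> 0" "b^2 = 4*a*c"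
  shows "c - (b/(2*a))*b + (b/(2*a))^2*a = 0"
proof -
  have "(b/(2*a))*b = b^2/(2*a)" by (simp add: power2_eq_square)
  also have "\<dots> = 2*c" using assms by simp
  finally have 1: "(b/(2*a))*b = 2*c" .
  have "(b/(2*a))^2*a = b^2/(4*a)" using assms(1) by (simp add: power2_eq_square)
  also have "\<dots> = c" using assms by simp
  finally show ?thesis using 1 by simp
qed
lemma quad_nonneg_zero:
  fixes b q :: real
  assumes "\<And>t. t*b + t^2*q \<ge> 0" shows "b = 0"
proof (rule ccontr)
  assume b: "b \<noteq> 0"
  define K where "K = \<bar>q\<bar> + 1"
  have K: "K > 0" "q - K < 0" unfolding K_def by auto
  have "(-b/K)*b + (-b/K)^2*q = b^2*(q - K)/K^2"
    using K by (simp add: field_simps power2_eq_square)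
  also have "\<dots> < 0" using K b by (simp add: divide_neg_pos mult_pos_neg)
  finally show False using assms[of "-b/K"] by simp
qed

lemma eq_CS:
  assumes sym: "transpose A = A" and ty: "type_r1_1 A" and dA: "det A \<noteq> 0"
    and u: "Qf A u < 0" and eq: "(Bf A u v)^2 = 4 * Qf A u * Qf A v"
  shows "v = (Bf A u v / (2 * Qf A u)) *\<^sub>R u"
proof -
  define l where "l = Bf A u v / (2 * Qf A u)"
  define w where "w = v - l *\<^sub>R u"
  have Buu: "Bf A u u = 2 * Qf A u" by (simp add: Qf_def)
  have Buw: "Bf A u w = 0" unfolding w_def l_def using u
    by (simp add: Bf_diff_right Bf_scale_right Buu)
  have "Qf A w = Qf A v - l * Bf A u v + l^2 * Qf A u"
    unfolding w_def using Qf_comb[OF sym, of 1 v "-l" u] Bf_sym[OF sym, of v u]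
    by (simp add: algebra_simps)
  also have "\<dots> = 0" unfolding l_def using u eq
    by (intro aux1) auto
  finally have Qw: "Qf A w = 0" .
  have "Bf A w x = 0" for x
  proof -
    define m where "m = Bf A u x / (2 * Qf A u)"
    define x' where "x' = x - m *\<^sub>R u"
    have Bux': "Bf A u x' = 0" unfolding x'_def m_def using u
      by (simp add: Bf_diff_right Bf_scale_right Buu)
    have "t * Bf A w x' + t^2 * Qf A x' \<ge> 0" for t
    proof -
      have "Bf A u (w + t *\<^sub>R x') = 0" by (simp add: Bf_add_right Bf_scale_right Buw Bux')
      hence "0 \<ge> 4 * Qf A u * Qf A (w + t *\<^sub>R x')"
        using rev_CS[OF sym ty u, of "w + t *\<^sub>R x'"] by simp
      hence "Qf A (w + t *\<^sub>R x') \<ge> 0" using u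
        by (smt (verit) mult_neg_neg mult_nonneg_nonneg)
      thus ?thesis using Qf_comb[OF sym, of 1 w t x'] Qw by simp
    qed
    hence "Bf A w x' = 0" by (rule quad_nonneg_zero)
    moreover have "Bf A w u = 0" using Buw Bf_sym[OF sym] by metis
    ultimately show ?thesis unfolding x'_def by (simp add: Bf_diff_right Bf_scale_right)
  qed
  hence "w = 0" using nondeg[OF dA] by blast
  thus ?thesis unfolding w_def l_def by simp
qed

definition Pf :: "int^'n^'n \<Rightarrow> real^'n \<Rightarrow> real^'n \<Rightarrow> real" where
  "Pf A c v = Qf A v - (Bf A c v)^2 / (2 * Qf A c)"

lemma Pf_pos:
  assumes sym: "transpose A = A" and ty: "type_r1_1 A" and dA: "det A \<noteq> 0"
    and c: "Qf A c < 0" and v: "v \<noteq> 0"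
  shows "Pf A c v > 0"
proof -
  have cs: "(Bf A c v)^2 \<ge> 4 * Qf A c * Qf A v" by (rule rev_CS[OF sym ty c])
  have "Qf A v * (4 * Qf A c) \<le> (Bf A c v)^2" using cs by (simp add: algebra_simps)
  hence q: "Qf A v \<ge> (Bf A c v)^2 / (4 * Qf A c)"
    using neg_divide_le_eq[of "4 * Qf A c" "(Bf A c v)^2" "Qf A v"] c by simp
  show ?thesis
  proof (cases "Bf A c v = 0")
    case True
    have "Qf A v \<noteq> 0"
    proof
      assume "Qf A v = 0"
      hence "v = (Bf A c v / (2 * Qf A c)) *\<^sub>R c" using eq_CS[OF sym ty dA c, of v] True by simp
      with True v show False by simp
    qed
    with q True show ?thesis by (simp add: Pf_def)
  next
    case False
    define bb where "bb = (Bf A c v)^2"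
    have bb: "bb > 0" using False bb_def by simp
    have "bb / (2 * Qf A c) = 2 * (bb / (4 * Qf A c))"
      using c by simp
    hence "bb / (4 * Qf A c) - bb / (2 * Qf A c) = -(bb / (4 * Qf A c))"
      by linarith
    also have "\<dots> > 0" using bb c by (simp add: divide_pos_neg)
    finally have "bb / (4 * Qf A c) - bb / (2 * Qf A c) > 0" .
    thus ?thesis using q bb_def by (simp add: Pf_def)
  qed
qed

lemma Pf_scale: "Pf A c (k *\<^sub>R v) = k^2 * Pf A c v"
  by (simp add: Pf_def Qf_scale Bf_scale_right power_mult_distrib right_diff_distrib)

lemma Pf_posdef:
  assumes sym: "transpose A = A" and ty: "type_r1_1 A" and dA: "det A \<noteq> 0"
    and c: "Qf A c < 0"
  shows "\<exists>e>0. \<forall>v. Pf A c v \<ge> e * (norm v)^2"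
proof -
  have c0: "c \<noteq> 0" using c by auto
  have ne: "sphere (0::real^'n) 1 \<noteq> {}" using c0 by (auto intro!: exI[of _ "c /\<^sub>R norm c"])
  have cont: "continuous_on (sphere 0 1) (Pf A c)"
    unfolding Pf_def by (intro continuous_intros cont_Qf cont_Bf) (use c in auto)
  obtain x0 where x0: "x0 \<in> sphere 0 1" and mn: "\<And>y. y \<in> sphere 0 1 \<Longrightarrow> Pf A c x0 \<le> Pf A c y"
    using continuous_attains_inf[OF compact_sphere ne cont] by blast
  have x00: "x0 \<noteq> 0" using x0 by auto
  have e: "Pf A c x0 > 0" by (rule Pf_pos[OF sym ty dA c x00])
  have "Pf A c v \<ge> Pf A c x0 * (norm v)^2" for v
  proof (cases "v = 0")
    case True then show ?thesis by (simp add: Pf_def)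
  next
    case False
    have "v = norm v *\<^sub>R (v /\<^sub>R norm v)" using False by simp
    hence "Pf A c v = (norm v)^2 * Pf A c (v /\<^sub>R norm v)" by (metis Pf_scale)
    moreover have "Pf A c (v /\<^sub>R norm v) \<ge> Pf A c x0" using False by (intro mn) simp
    ultimately show ?thesis
      using mult_left_mono[of "Pf A c x0" "Pf A c (v /\<^sub>R norm v)" "(norm v)^2"] by (simp add: mult.commute)
  qed
  with e show ?thesis by blast
qed




definition gauss :: "real \<Rightarrow> real" where "gauss t = exp (-pi * t^2)"

lemma gauss_even: "gauss (-t) = gauss t" by (simp add: gauss_def)
lemma gauss_nonneg: "gauss t \<ge> 0" by (simp add: gauss_def)
lemma gauss_cont: "continuous_on S gauss" unfolding gauss_def by (intro continuous_intros)

lemma gauss_half: "(gauss has_integral 1/2) {0..}"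
proof -
  define f where "f = (\<lambda>x::real. indicator {0..} x *\<^sub>R exp (- x\<^sup>2))"
  have h: "has_bochner_integral lborel f (sqrt pi / 2)"
    unfolding f_def by (rule gaussian_moment_0)
  hence int: "integrable lborel f" and val: "integral\<^sup>L lborel f = sqrt pi / 2"
    by (auto simp: has_bochner_integral_iff)
  have sp: "sqrt pi > 0" by simp
  have eq: "(\<lambda>x. f (0 + sqrt pi * x)) = (\<lambda>x. indicator {0..} x * gauss x)"
    using sp by (auto simp: f_def gauss_def indicator_def zero_le_mult_iff power_mult_distrib fun_eq_iff) (use pi_gt_zero in linarith)
  have int2: "integrable lborel (\<lambda>x. f (0 + sqrt pi * x))"
    using lborel_integrable_real_affine[OF int, of "sqrt pi" 0] sp by simp
  have "integral\<^sup>L lborel f = \<bar>sqrt pi\<bar> *\<^sub>R integral\<^sup>L lborel (\<lambda>x. f (0 + sqrt pi * x))"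
    using lborel_integral_real_affine[of "sqrt pi" f 0] sp by simp
  hence v2: "integral\<^sup>L lborel (\<lambda>x. f (0 + sqrt pi * x)) = 1/2"
    using val sp by (simp add: field_simps)
  have "((\<lambda>x. f (0 + sqrt pi * x)) has_integral 1/2) UNIV"
    by (subst v2[symmetric]) (rule has_integral_integral_lborel[OF int2])
  have "((\<lambda>x. if x \<in> {0..} then gauss x else 0) has_integral 1/2) UNIV"
  proof -
    have "(\<lambda>x. indicator {0..} x * gauss x) = (\<lambda>x. if x \<in> {0..} then gauss x else 0)"
      by (auto simp: indicator_def fun_eq_iff)
    thus ?thesis using \<open>((\<lambda>x. f (0 + sqrt pi * x)) has_integral 1/2) UNIV\<close> unfolding eq by simp
  qed
  thus ?thesis by (simp only: has_integral_restrict_UNIV)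
qed

lemma gint: "gauss integrable_on {a..b}"
  by (intro integrable_continuous_interval gauss_cont)

lemma J_le: "integral {0..u} gauss \<le> 1/2"
proof -
  have "integral {0..u} gauss \<le> integral {0..} gauss"
    by (rule integral_subset_le) (use gint gauss_half gauss_nonneg in auto)
  thus ?thesis using gauss_half by (simp add: integral_unique)
qed

lemma J_lim: "(\<lambda>n. integral {0..real n} gauss) \<longlonglongrightarrow> 1/2"
proof -
  define f where "f = (\<lambda>(k::nat) x. if x \<in> {0..real k} then gauss x else 0)"
  have fi: "(f k has_integral integral {0..real k} gauss) {0..}" for k
    unfolding f_def using has_integral_restrict[of "{0..real k}" "{0..}" gauss] gint[of 0 "real k"]
    by auto
  have "(\<lambda>k. integral {0..} (f k)) \<longlonglongrightarrow> integral {0..} gauss"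
  proof (rule dominated_convergence(2))
    show "f k integrable_on {0..}" for k using fi by blast
    show "gauss integrable_on {0..}" using gauss_half by blast
    show "norm (f k x) \<le> gauss x" if "x \<in> {0..}" for k x by (auto simp: f_def gauss_nonneg)
    show "(\<lambda>k. f k x) \<longlonglongrightarrow> gauss x" if "x \<in> {0..}" for x
    proof -
      have "f k x = gauss x" if k: "k \<ge> nat \<lceil>x\<rceil>" for k
      proof -
        have "x \<le> real (nat \<lceil>x\<rceil>)" by (rule real_nat_ceiling_ge)
        also have "\<dots> \<le> real k" using k by simp
        finally show ?thesis using \<open>x \<in> {0..}\<close> by (simp add: f_def)
      qed
      hence "eventually (\<lambda>k. f k x = gauss x) sequentially"
        by (intro eventually_sequentiallyI[of "nat \<lceil>x\<rceil>"])
      thus ?thesis by (simp add: tendsto_eventually)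
    qed
  qed
  moreover have "integral {0..} (f k) = integral {0..real k} gauss" for k using fi by (rule integral_unique)
  moreover have "integral {0..} gauss = 1/2" using gauss_half by (simp add: integral_unique)
  ultimately show ?thesis by simp
qed

lemma J_tail:
  assumes u: "u \<ge> 0"
  shows "1/2 \<le> integral {0..u} gauss + exp (-pi * u^2) / 2"
proof -
  have bound: "integral {0..real m} gauss \<le> integral {0..u} gauss + exp (-pi * u^2) / 2"
    if m: "real m \<ge> u" for m :: nat
  proof -
    have "integral {0..real m} gauss = integral {0..u} gauss + integral {u..real m} gauss"
      using Henstock_Kurzweil_Integration.integral_combine[where a=0 and c=u and b="real m" and f=gauss] u m gint by simp
    moreover have "integral {u..real m} gauss = integral {0..real m - u} (gauss \<circ> (+) u)"
      using integral_shift_Icc_real[of 0 "real m - u" gauss u] by simp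
    moreover have "integral {0..real m - u} (gauss \<circ> (+) u) \<le> integral {0..real m - u} (\<lambda>s. exp (-pi * u^2) * gauss s)"
    proof (rule integral_le)
      show "(gauss \<circ> (+) u) integrable_on {0..real m - u}" unfolding gauss_def o_def
        by (intro integrable_continuous_interval continuous_intros)
      show "(\<lambda>s. exp (-pi * u^2) * gauss s) integrable_on {0..real m - u}" unfolding gauss_def
        by (intro integrable_continuous_interval continuous_intros)
      fix s assume "s \<in> {0..real m - u}"
      hence s: "s \<ge> 0" by simp
      have "-pi * (u+s)^2 \<le> -pi * u^2 + -pi * s^2"
        using u s by (simp add: power2_eq_square algebra_simps)
      thus "(gauss \<circ> (+) u) s \<le> exp (-pi * u^2) * gauss s"
        by (simp add: gauss_def exp_add[symmetric])
    qed
    moreover have "integral {0..real m - u} (\<lambda>s. exp (-pi * u^2) * gauss s) \<le> exp (-pi * u^2) / 2"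
      using J_le[of "real m - u"] by simp
    ultimately show ?thesis by linarith
  qed
  have ev: "\<exists>N. \<forall>m\<ge>N. integral {0..real m} gauss \<le> integral {0..u} gauss + exp (-pi * u^2) / 2"
  proof (intro exI allI impI)
    fix m assume "m \<ge> nat \<lceil>u\<rceil>"
    hence "real m \<ge> u" by (meson le_nat_iff of_nat_le_iff order.trans real_nat_ceiling_ge)
    thus "integral {0..real m} gauss \<le> integral {0..u} gauss + exp (-pi * u^2) / 2" by (rule bound)
  qed
  show ?thesis using J_lim ev by (rule LIMSEQ_le_const2)
qed

lemma Ef_eq: "Ef u = 2 * (if 0 \<le> u then integral {0..u} gauss else - integral {0..-u} gauss)"
proof -
  have e: "integral {u..0} gauss = integral {0..-u} gauss"
    using Henstock_Kurzweil_Integration.integral_reflect_real[of 0 u gauss] by (simp only: gauss_even minus_zero)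
  show ?thesis unfolding Ef_def gauss_def[symmetric] e by (rule refl)
qed

lemma Ef_bound: "\<bar>sgn u - Ef u\<bar> \<le> exp (-pi * u^2)"
proof -
  consider "u > 0" | "u = 0" | "u < 0" by linarith
  thus ?thesis
  proof cases
    case 1
    then show ?thesis using J_le[of u] J_tail[of u] by (simp add: Ef_eq)
  next
    case 2 then show ?thesis by (simp add: Ef_eq)
  next
    case 3
    show ?thesis using 3 J_le[of "-u"] J_tail[of "-u"] by (simp add: Ef_eq)
  qed
qed




lemma sum_exp_nat: assumes "m > 0" shows "(\<lambda>n::nat. exp (-m * real n)) summable_on UNIV"
proof -
  have "summable (\<lambda>n::nat. (exp (-m)) ^ n)" using assms by (intro summable_geometric) simp
  hence "summable (\<lambda>n::nat. exp (-m * real n))" by (simp add: exp_of_nat_mult[symmetric] mult.commute)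
  thus ?thesis by (subst summable_on_UNIV_nonneg_real_iff) auto
qed

lemma sum_exp_int: assumes "m > 0" shows "(\<lambda>k::int. exp (-m * \<bar>real_of_int k\<bar>)) summable_on UNIV"
proof -
  let ?f = "\<lambda>k::int. exp (-m * \<bar>real_of_int k\<bar>)"
  have 1: "?f summable_on (int ` UNIV)"
    using sum_exp_nat[OF assms] by (subst summable_on_reindex) (auto simp: o_def)
  have "(\<lambda>n::nat. exp (-m) * exp (-m * real n)) summable_on UNIV"
    by (intro summable_on_cmult_right sum_exp_nat assms)
  hence 2: "?f summable_on ((\<lambda>n. - int (Suc n)) ` UNIV)"
    by (subst summable_on_reindex) (auto simp: inj_on_def o_def exp_add[symmetric] algebra_simps)
  have "?f summable_on (int ` UNIV \<union> (\<lambda>n. - int (Suc n)) ` UNIV)"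
    by (rule summable_on_Un_disjoint[OF 1 2]) auto
  moreover have "int ` UNIV \<union> (\<lambda>n. - int (Suc n)) ` UNIV = UNIV"
  proof -
    have "k \<in> int ` UNIV \<union> (\<lambda>n. - int (Suc n)) ` UNIV" for k
    proof (cases "k \<ge> 0")
      case True then show ?thesis by (auto intro!: image_eqI[of _ _ "nat k"])
    next
      case False then show ?thesis by (auto intro!: image_eqI[of _ _ "nat (-k-1)"])
    qed
    thus ?thesis by auto
  qed
  ultimately show ?thesis by simp
qed

lemma sum_exp_prod: assumes "m > 0"
  shows "(\<lambda>n::int^'n. \<Prod>i\<in>UNIV. exp (-m * \<bar>real_of_int (n$i)\<bar>)) summable_on UNIV"
proof -
  have "Infinite_Set_Sum.abs_summable_on (\<lambda>g. \<Prod>i\<in>(UNIV::'n set). exp (-m * \<bar>real_of_int (g i)\<bar>)) (PiE UNIV (\<lambda>_. UNIV))"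
  proof (rule abs_summable_on_prod_PiE)
    show "Infinite_Set_Sum.abs_summable_on (\<lambda>k::int. exp (-m * \<bar>real_of_int k\<bar>)) UNIV" for i :: 'n
      using sum_exp_int[OF assms] abs_summable_equivalent[of "\<lambda>k::int. exp (-m * \<bar>real_of_int k\<bar>)" UNIV]
      by simp
  qed auto
  hence h: "Infinite_Set_Sum.abs_summable_on (\<lambda>g. \<Prod>i\<in>(UNIV::'n set). exp (-m * \<bar>real_of_int (g i)\<bar>)) UNIV"
    by simp
  have h2: "Infinite_Sum.abs_summable_on (\<lambda>g. \<Prod>i\<in>(UNIV::'n set). exp (-m * \<bar>real_of_int (g i)\<bar>)) UNIV"
    by (rule abs_summable_equivalent[THEN iffD2, OF h])
  hence s0: "(\<lambda>g. \<Prod>i\<in>(UNIV::'n set). exp (-m * \<bar>real_of_int (g i)\<bar>)) summable_on UNIV"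
    by (simp add: abs_prod)
  have su: "vec_nth ` UNIV = (UNIV :: ('n \<Rightarrow> int) set)"
    by (auto intro!: image_eqI[of _ vec_nth "vec_lambda _"])
  have s: "(\<lambda>g. \<Prod>i\<in>(UNIV::'n set). exp (-m * \<bar>real_of_int (g i)\<bar>)) summable_on (vec_nth ` UNIV)"
    using s0 su by simp
  have "((\<lambda>g. \<Prod>i\<in>(UNIV::'n set). exp (-m * \<bar>real_of_int (g i)\<bar>)) \<circ> vec_nth) summable_on UNIV"
    using s by (subst (asm) summable_on_reindex) (auto simp: inj_on_def vec_eq_iff)
  thus ?thesis by (simp add: o_def)
qed

lemma sum_exp_lattice:
  fixes a :: "real^'n"
  assumes l: "l > 0"
  shows "(\<lambda>n::int^'n. exp (-l * norm (int_vec n + a))) summable_on UNIV"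
proof -
  define m where "m = l / real CARD('n)"
  have m: "m > 0" using l by (simp add: m_def)
  have le: "exp (-l * norm (int_vec n + a)) \<le> exp (l * norm a) * (\<Prod>i\<in>UNIV. exp (-m * \<bar>real_of_int (n$i)\<bar>))" for n
  proof -
    have c: "\<bar>real_of_int (n$i)\<bar> \<le> norm (int_vec n)" for i
      using component_le_norm_cart[of "int_vec n" i] by (simp add: int_vec_def)
    have "(\<Sum>i\<in>UNIV. \<bar>real_of_int (n$i)\<bar>) \<le> (\<Sum>i\<in>(UNIV::'n set). norm (int_vec n))"
      by (intro sum_mono c)
    hence "(\<Sum>i\<in>UNIV. \<bar>real_of_int (n$i)\<bar>) \<le> real CARD('n) * norm (int_vec n)" by simp
    hence s: "m * (\<Sum>i\<in>UNIV. \<bar>real_of_int (n$i)\<bar>) \<le> l * norm (int_vec n)"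
      using l by (simp add: m_def field_simps)
    have t: "norm (int_vec n) \<le> norm (int_vec n + a) + norm a"
      using norm_triangle_ineq4[of "int_vec n + a" a] by simp
    have "-l * norm (int_vec n + a) \<le> l * norm a + - m * (\<Sum>i\<in>UNIV. \<bar>real_of_int (n$i)\<bar>)"
    proof -
      have "l * norm (int_vec n) \<le> l * norm (int_vec n + a) + l * norm a"
        using mult_left_mono[OF t, of l] l by (simp add: distrib_left)
      thus ?thesis using s by linarith
    qed
    hence "exp (-l * norm (int_vec n + a)) \<le> exp (l * norm a + - m * (\<Sum>i\<in>UNIV. \<bar>real_of_int (n$i)\<bar>))"
      by simp
    also have "\<dots> = exp (l * norm a) * (\<Prod>i\<in>UNIV. exp (-m * \<bar>real_of_int (n$i)\<bar>))"
      by (simp add: exp_add exp_sum sum_distrib_left)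
    finally show ?thesis .
  qed
  show ?thesis
    by (rule summable_on_comparison_test[OF summable_on_cmult_right[OF sum_exp_prod[OF m]] le]) simp
qed




lemma sq_ge_abs: "(x::real)^2 \<ge> \<bar>x\<bar> - 1/4"
proof -
  have "0 \<le> (\<bar>x\<bar> - 1/2)^2" by simp
  also have "\<dots> = x^2 - \<bar>x\<bar> + 1/4" by (simp add: power2_eq_square algebra_simps)
  finally show ?thesis by simp
qed

lemma cone_B:
  assumes sym: "transpose A = A" and ty: "type_r1_1 A" and dA: "det A \<noteq> 0"
    and Q0: "Qf A c0 < 0" and q1: "Qf A c1 \<le> 0" and b1: "Bf A c1 c0 < 0"
    and q2: "Qf A c2 \<le> 0" and b2: "Bf A c2 c0 < 0"
  shows "Bf A c1 c2 < 0 \<or> (\<exists>t>0. c2 = t *\<^sub>R c1)"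
proof (rule ccontr)
  assume H: "\<not> ?thesis"
  hence B0: "Bf A c1 c2 \<ge> 0" and np: "\<not> (\<exists>t>0. c2 = t *\<^sub>R c1)" by auto
  define x where "x = Bf A c2 c0 *\<^sub>R c1 + (- Bf A c1 c0) *\<^sub>R c2"
  have Bx: "Bf A c0 x = 0"
    unfolding x_def using Bf_sym[OF sym, of c0 c1] Bf_sym[OF sym, of c0 c2]
    by (simp add: Bf_add_right Bf_diff_right Bf_scale_right)
  have "0 \<ge> 4 * Qf A c0 * Qf A x" using rev_CS[OF sym ty Q0, of x] Bx by simp
  hence Qx: "Qf A x \<ge> 0" using Q0 by (smt (verit) mult_neg_neg mult_nonneg_nonneg)
  have Qxe: "Qf A x = (Bf A c2 c0)^2 * Qf A c1 + Bf A c2 c0 * (- Bf A c1 c0) * Bf A c1 c2 + (Bf A c1 c0)^2 * Qf A c2"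
    using Qf_comb[OF sym, of "Bf A c2 c0" c1 "- Bf A c1 c0" c2] unfolding x_def by simp
  have t1: "(Bf A c2 c0)^2 * Qf A c1 \<le> 0" using q1 by (simp add: mult_nonneg_nonpos)
  have t3: "(Bf A c1 c0)^2 * Qf A c2 \<le> 0" using q2 by (simp add: mult_nonneg_nonpos)
  have pp: "Bf A c2 c0 * (- Bf A c1 c0) < 0" using b1 b2 mult_neg_neg[of "Bf A c2 c0" "Bf A c1 c0"] by simp
  have t2: "Bf A c2 c0 * (- Bf A c1 c0) * Bf A c1 c2 \<le> 0" using pp B0 by (simp add: mult_nonpos_nonneg)
  have Q0x: "Qf A x = 0" using Qx Qxe t1 t2 t3 by linarith
  have "x = (Bf A c0 x / (2 * Qf A c0)) *\<^sub>R c0" by (rule eq_CS[OF sym ty dA Q0]) (simp add: Bx Q0x)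
  hence "x = 0" using Bx by simp
  hence "Bf A c2 c0 *\<^sub>R c1 = Bf A c1 c0 *\<^sub>R c2" unfolding x_def by (simp add: algebra_simps)
  hence "c2 = (Bf A c2 c0 / Bf A c1 c0) *\<^sub>R c1" using b1
    by (metis (no_types, lifting) divideR_right less_irrefl scaleR_scaleR divide_inverse_commute
        inverse_eq_divide)
  moreover have "Bf A c2 c0 / Bf A c1 c0 > 0" using b1 b2 by (simp add: divide_neg_neg)
  ultimately show False using np by blast
qed

lemma g_neg:
  assumes sym: "transpose A = A" and ty: "type_r1_1 A" and dA: "det A \<noteq> 0"
    and q1: "Qf A c1 \<le> 0" and q2: "Qf A c2 \<le> 0" and B: "Bf A c1 c2 < 0"
    and np: "\<not> (\<exists>t>0. c2 = t *\<^sub>R c1)"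
  shows "4 * Qf A c1 * Qf A c2 - (Bf A c1 c2)^2 < 0"
proof (cases "Qf A c1 < 0")
  case True
  have le: "(Bf A c1 c2)^2 \<ge> 4 * Qf A c1 * Qf A c2" by (rule rev_CS[OF sym ty True])
  show ?thesis
  proof (rule ccontr)
    assume "\<not> ?thesis"
    hence "(Bf A c1 c2)^2 = 4 * Qf A c1 * Qf A c2" using le by linarith
    hence "c2 = (Bf A c1 c2 / (2 * Qf A c1)) *\<^sub>R c1" by (rule eq_CS[OF sym ty dA True])
    moreover have "Bf A c1 c2 / (2 * Qf A c1) > 0" using B True by (simp add: divide_neg_neg)
    ultimately show False using np by blast
  qed
next
  case False
  hence "Qf A c1 = 0" using q1 by simp
  thus ?thesis using B by simp
qed

lemma Nbound:
  fixes Q1 Q2 B p q d :: real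
  assumes "Q1 \<le> 0" "B < 0" "p * q \<le> 0" "d > 0" "Q1 < 0 \<or> \<bar>p\<bar> \<ge> d"
  shows "- Q2 * p^2 + B * p * q - Q1 * q^2 \<ge> (if Q1 < 0 then - Q1 else - B * d) * \<bar>q\<bar>
           - (if Q1 < 0 then - Q1 else - B * d) / 4 - Q2 * p^2"
proof -
  have pq: "B * p * q \<ge> 0" using assms(2,3) by (simp add: mult.assoc mult_nonpos_nonpos)
  show ?thesis
  proof (cases "Q1 < 0")
    case True
    have "- Q1 * q^2 \<ge> - Q1 * (\<bar>q\<bar> - 1/4)" using True sq_ge_abs[of q] by (simp add: mult_left_mono)
    thus ?thesis using True pq by (simp add: algebra_simps)
  next
    case False
    hence pd: "\<bar>p\<bar> \<ge> d" and Q1: "Q1 = 0" using assms by auto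
    have "B * p * q = (- B) * (\<bar>p\<bar> * \<bar>q\<bar>)"
      using assms(3) by (simp add: abs_mult[symmetric] abs_of_nonpos mult.assoc)
    also have "\<dots> \<ge> (- B) * (d * \<bar>q\<bar>)"
      using pd assms(2) by (intro mult_left_mono mult_right_mono) auto
    finally have "B * p * q \<ge> - B * d * \<bar>q\<bar>" by (simp add: mult.assoc)
    moreover have "- B * d \<ge> 0" using assms(2,4) mult_nonpos_nonneg[of B d] by simp
    ultimately show ?thesis using Q1 by simp
  qed
qed

lemma nn_aux: fixes k k1 k2 N X Y a b :: real
  assumes a: "k*b \<le> k1*b" and b: "k*a \<le> k2*a" and c1: "k1*b - k1/4 - X \<le> N" and c2: "k2*a - k2/4 - Y \<le> N"
    and "X \<le> 0" "Y \<le> 0" "0<k1" "0<k2"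
  shows "N \<ge> k*(a+b)/2 - k1/4 - k2/4"
proof -
  have c: "k * (a + b) = k * a + k * b" by (simp add: algebra_simps)
  have "k * b \<le> N + k1 / 4" using a c1 assms(5) by linarith
  moreover have "k * a \<le> N + k2 / 4" using b c2 assms(6) by linarith
  ultimately have "k * (a + b) \<le> 2 * N + k1 / 4 + k2 / 4" using c by linarith
  moreover have "k1 / 4 + k2 / 4 \<le> 2 * (k1 / 4 + k2 / 4)" using assms by simp
  ultimately have "k * (a + b) \<le> 2 * N + 2 * (k1 / 4 + k2 / 4)" by linarith
  thus ?thesis by (simp add: field_simps)
qed
lemma abs_aux: fixes x y a b c :: real
  shows "2 * \<bar>a\<bar> * \<bar>x\<bar> + \<bar>b\<bar> * \<bar>y\<bar> \<le> (2 * \<bar>c\<bar> + 2 * \<bar>a\<bar> + \<bar>b\<bar>) * (\<bar>x\<bar> + \<bar>y\<bar>)"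
proof -
  have "(2 * \<bar>c\<bar> + 2 * \<bar>a\<bar> + \<bar>b\<bar>) * (\<bar>x\<bar> + \<bar>y\<bar>) =
     (2 * \<bar>a\<bar> * \<bar>x\<bar> + \<bar>b\<bar> * \<bar>y\<bar>) + (2 * \<bar>c\<bar> * (\<bar>x\<bar> + \<bar>y\<bar>) + 2 * \<bar>a\<bar> * \<bar>y\<bar> + \<bar>b\<bar> * \<bar>x\<bar>)"
    by (simp add: algebra_simps)
  moreover have "0 \<le> 2 * \<bar>c\<bar> * (\<bar>x\<bar> + \<bar>y\<bar>) + 2 * \<bar>a\<bar> * \<bar>y\<bar> + \<bar>b\<bar> * \<bar>x\<bar>" by simp
  ultimately show ?thesis by linarith
qed
lemma tri_aux: fixes a b x y :: real
  shows "\<bar>2 * a * x - b * y\<bar> \<le> 2 * \<bar>a\<bar> * \<bar>x\<bar> + \<bar>b\<bar> * \<bar>y\<bar>"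
proof -
  have "\<bar>2 * a * x - b * y\<bar> \<le> \<bar>2 * a * x\<bar> + \<bar>b * y\<bar>" by (rule abs_triangle_ineq4)
  thus ?thesis by (simp add: abs_mult)
qed

lemma n2_aux: fixes k P G k1 k2 :: real
  assumes G: "G > 0"
  shows "(k * P / 2 - k1 / 4 - k2 / 4) / G = k / (4 * G) * P + k / (4 * G) * P - (k1 + k2) / (4 * G)"
  using assms by (simp add: field_simps)

lemma region:
  assumes sym: "transpose A = A" and ty: "type_r1_1 A" and dA: "det A \<noteq> 0"
    and q1: "Qf A c1 \<le> 0" and q2: "Qf A c2 \<le> 0" and B: "Bf A c1 c2 < 0"
    and np: "\<not> (\<exists>t>0. c2 = t *\<^sub>R c1)" and d: "d > 0"
    and d1: "Qf A c1 < 0 \<or> (\<forall>v\<in>V. \<bar>Bf A c1 v\<bar> \<ge> d)"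
    and d2: "Qf A c2 < 0 \<or> (\<forall>v\<in>V. \<bar>Bf A c2 v\<bar> \<ge> d)"
  shows "\<exists>k>0. \<exists>C. \<forall>v\<in>V. Bf A c1 v * Bf A c2 v \<le> 0 \<longrightarrow> Qf A v \<ge> k * norm v - C"
proof -
  define Q1 where "Q1 = Qf A c1"
  define Q2 where "Q2 = Qf A c2"
  define BB where "BB = Bf A c1 c2"
  define g where "g = 4 * Q1 * Q2 - BB^2"
  have g: "g < 0" unfolding g_def Q1_def Q2_def BB_def by (rule g_neg[OF sym ty dA q1 q2 B np])
  define G where "G = - g"
  have G: "G > 0" using g G_def by simp
  define c where "c = c1 + c2"
  have Qc: "Qf A c < 0" unfolding c_def using Qf_add[OF sym, of c1 c2] q1 q2 B by simp
  obtain e where e: "e > 0" and Pc: "\<And>v. Pf A c v \<ge> e * (norm v)^2"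
    using Pf_posdef[OF sym ty dA Qc] by blast
  define k1 where "k1 = (if Q1 < 0 then - Q1 else - BB * d)"
  define k2 where "k2 = (if Q2 < 0 then - Q2 else - BB * d)"
  have k1: "k1 > 0" unfolding k1_def using B d BB_def by (auto simp: mult_neg_pos)
  have k2: "k2 > 0" unfolding k2_def using B d BB_def by (auto simp: mult_neg_pos)
  define k where "k = min k1 k2"
  have k: "k > 0" using k1 k2 k_def by simp
  define L where "L = (2 * \<bar>Q1\<bar> + 2 * \<bar>Q2\<bar> + \<bar>BB\<bar>) / G * (norm c1 + norm c2) + 1"
  have L: "L > 0" unfolding L_def using G by (simp add: add_nonneg_pos)
  define kk where "kk = min (k / (4 * G * L)) e"
  have kk: "kk > 0" using k G L e kk_def by simp
  define CC where "CC = (k1 + k2) / (4 * G) + e / 4"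
  have main: "Qf A v \<ge> kk * norm v - CC" if v: "v \<in> V" and pq: "Bf A c1 v * Bf A c2 v \<le> 0" for v
  proof -
    define p where "p = Bf A c1 v"
    define q where "q = Bf A c2 v"
    have pq': "p * q \<le> 0" using pq p_def q_def by simp
    define al where "al = (2 * Q2 * p - BB * q) / g"
    define be where "be = (2 * Q1 * q - BB * p) / g"
    define h where "h = al *\<^sub>R c1 + be *\<^sub>R c2"
    define w where "w = v - h"
    have B11: "Bf A c1 c1 = 2 * Q1" and B22: "Bf A c2 c2 = 2 * Q2" by (simp_all add: Q1_def Q2_def Qf_def)
    have B21: "Bf A c2 c1 = BB" using Bf_sym[OF sym] BB_def by metis
    have h1: "Bf A c1 h = p"
    proof -
      have "Bf A c1 h = al * (2 * Q1) + be * BB"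
        by (simp add: h_def Bf_add_right Bf_scale_right B11 BB_def)
      also have "\<dots> = ((2 * Q2 * p - BB * q) * (2 * Q1) + (2 * Q1 * q - BB * p) * BB) / g"
        by (simp add: al_def be_def add_divide_distrib)
      also have "\<dots> = p * g / g" by (simp add: g_def algebra_simps power2_eq_square)
      also have "\<dots> = p" using g by simp
      finally show ?thesis .
    qed
    have h2: "Bf A c2 h = q"
    proof -
      have "Bf A c2 h = al * BB + be * (2 * Q2)"
        by (simp add: h_def Bf_add_right Bf_scale_right B22 B21)
      also have "\<dots> = ((2 * Q2 * p - BB * q) * BB + (2 * Q1 * q - BB * p) * (2 * Q2)) / g"
        by (simp add: al_def be_def add_divide_distrib)
      also have "\<dots> = q * g / g" by (simp add: g_def algebra_simps power2_eq_square)
      also have "\<dots> = q" using g by simp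
      finally show ?thesis .
    qed
    have w1: "Bf A c1 w = 0" using h1 by (simp add: w_def Bf_diff_right p_def)
    have w2: "Bf A c2 w = 0" using h2 by (simp add: w_def Bf_diff_right q_def)
    have hw: "Bf A h w = 0" using w1 w2 by (simp add: h_def Bf_add_left Bf_scale_left)
    have hh: "Bf A h h = al * p + be * q" using h1 h2 by (simp add: h_def Bf_add_left Bf_scale_left)
    have Qv: "Qf A v = (al * p + be * q) / 2 + Qf A w"
      using Qf_add[OF sym, of h w] hw hh w_def by (simp add: Qf_def)
    define N where "N = - Q2 * p^2 + BB * p * q - Q1 * q^2"
    have alN: "(al * p + be * q) / 2 = N / G"
    proof -
      have "al * p + be * q = ((2 * Q2 * p - BB * q) * p + (2 * Q1 * q - BB * p) * q) / g"
        by (simp add: al_def be_def add_divide_distrib)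
      also have "\<dots> = (-2 * N) / g" by (simp add: N_def algebra_simps power2_eq_square)
      finally show ?thesis using g G_def by simp
    qed
    have Qw: "Qf A w \<ge> e * norm w - e / 4"
    proof -
      have "Bf A c w = 0" using w1 w2 by (simp add: c_def Bf_add_left)
      hence "Pf A c w = Qf A w" by (simp add: Pf_def)
      moreover have "e * (norm w)^2 \<ge> e * (norm w - 1/4)"
        using e sq_ge_abs[of "norm w"] by (simp add: mult_left_mono)
      ultimately show ?thesis using Pc[of w] by (simp add: algebra_simps)
    qed
    have Nq: "N \<ge> k1 * \<bar>q\<bar> - k1 / 4 - Q2 * p^2"
      unfolding N_def k1_def
      by (rule Nbound) (use q1 B pq' d d1 v in \<open>auto simp: Q1_def BB_def p_def\<close>)
    have Np: "N \<ge> k2 * \<bar>p\<bar> - k2 / 4 - Q1 * q^2"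
    proof -
      have "- Q1 * q^2 + BB * q * p - Q2 * p^2 \<ge> k2 * \<bar>p\<bar> - k2 / 4 - Q1 * q^2"
        unfolding k2_def
        by (rule Nbound) (use q2 B pq' d d2 v in \<open>auto simp: Q2_def BB_def q_def mult.commute\<close>)
      thus ?thesis by (simp add: N_def algebra_simps)
    qed
    have Q2p: "Q2 * p^2 \<le> 0" and Q1q: "Q1 * q^2 \<le> 0" using q1 q2 by (simp_all add: Q1_def Q2_def mult_nonpos_nonneg)
    have NN: "N \<ge> k * (\<bar>p\<bar> + \<bar>q\<bar>) / 2 - k1 / 4 - k2 / 4"
    proof (rule nn_aux[where X = "Q2 * p^2" and Y = "Q1 * q^2"])
      show "k * \<bar>q\<bar> \<le> k1 * \<bar>q\<bar>" by (simp add: k_def mult_right_mono)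
      show "k * \<bar>p\<bar> \<le> k2 * \<bar>p\<bar>" by (simp add: k_def mult_right_mono)
    qed (use Nq Np Q2p Q1q k1 k2 in auto)
    have hn: "norm h \<le> (L - 1) * (\<bar>p\<bar> + \<bar>q\<bar>)"
    proof -
      define D where "D = (2 * \<bar>Q1\<bar> + 2 * \<bar>Q2\<bar> + \<bar>BB\<bar>) / G"
      have D: "D \<ge> 0" using G by (simp add: D_def)
      have a1: "\<bar>al\<bar> \<le> D * (\<bar>p\<bar> + \<bar>q\<bar>)"
      proof -
        have "\<bar>2 * Q2 * p - BB * q\<bar> \<le> 2 * \<bar>Q2\<bar> * \<bar>p\<bar> + \<bar>BB\<bar> * \<bar>q\<bar>"
          by (rule tri_aux)
        also have "\<dots> \<le> (2 * \<bar>Q1\<bar> + 2 * \<bar>Q2\<bar> + \<bar>BB\<bar>) * (\<bar>p\<bar> + \<bar>q\<bar>)"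
          by (rule abs_aux)
        finally have "\<bar>2 * Q2 * p - BB * q\<bar> / G \<le> D * (\<bar>p\<bar> + \<bar>q\<bar>)"
          using G by (simp add: D_def divide_right_mono)
        moreover have "\<bar>al\<bar> = \<bar>2 * Q2 * p - BB * q\<bar> / G" using g G_def by (simp add: al_def abs_div)
        ultimately show ?thesis by simp
      qed
      have b1: "\<bar>be\<bar> \<le> D * (\<bar>p\<bar> + \<bar>q\<bar>)"
      proof -
        have "\<bar>2 * Q1 * q - BB * p\<bar> \<le> 2 * \<bar>Q1\<bar> * \<bar>q\<bar> + \<bar>BB\<bar> * \<bar>p\<bar>"
          by (rule tri_aux)
        also have "\<dots> \<le> (2 * \<bar>Q2\<bar> + 2 * \<bar>Q1\<bar> + \<bar>BB\<bar>) * (\<bar>q\<bar> + \<bar>p\<bar>)"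
          by (rule abs_aux)
        also have "\<dots> = (2 * \<bar>Q1\<bar> + 2 * \<bar>Q2\<bar> + \<bar>BB\<bar>) * (\<bar>p\<bar> + \<bar>q\<bar>)"
          by (simp add: algebra_simps)
        finally have "\<bar>2 * Q1 * q - BB * p\<bar> / G \<le> D * (\<bar>p\<bar> + \<bar>q\<bar>)"
          using G by (simp add: D_def divide_right_mono)
        moreover have "\<bar>be\<bar> = \<bar>2 * Q1 * q - BB * p\<bar> / G" using g G_def by (simp add: be_def abs_div)
        ultimately show ?thesis by simp
      qed
      have "norm h \<le> \<bar>al\<bar> * norm c1 + \<bar>be\<bar> * norm c2"
        unfolding h_def by (metis norm_scaleR norm_triangle_ineq)
      also have "\<dots> \<le> D * (\<bar>p\<bar> + \<bar>q\<bar>) * norm c1 + D * (\<bar>p\<bar> + \<bar>q\<bar>) * norm c2"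
        by (intro add_mono mult_right_mono a1 b1) auto
      also have "\<dots> = (L - 1) * (\<bar>p\<bar> + \<bar>q\<bar>)"
      proof -
        have L1: "L - 1 = D * (norm c1 + norm c2)" by (simp add: L_def D_def)
        show ?thesis unfolding L1 by (simp add: algebra_simps)
      qed
      finally show ?thesis .
    qed
    define P where "P = \<bar>p\<bar> + \<bar>q\<bar>"
    have P: "P \<ge> 0" by (simp add: P_def)
    have nv: "norm v \<le> L * P + norm w"
    proof -
      have "norm v \<le> norm h + norm w" unfolding w_def by (metis diff_add_cancel norm_triangle_ineq add.commute)
      also have "\<dots> \<le> (L - 1) * P + norm w" using hn P_def by simp
      also have "\<dots> \<le> L * P + norm w" using P by (simp add: algebra_simps)
      finally show ?thesis .
    qed
    define K4 where "K4 = k / (4 * G)"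
    define C0 where "C0 = (k1 + k2) / (4 * G)"
    have K4: "K4 \<ge> 0" using k G by (simp add: K4_def)
    have K4P: "K4 * P \<ge> 0" using K4 P by simp
    have kkL: "kk \<le> K4 / L"
    proof -
      have "kk \<le> k / (4 * G * L)" by (simp add: kk_def)
      also have "k / (4 * G * L) = K4 / L" by (simp add: K4_def)
      finally show ?thesis .
    qed
    have A1: "kk * norm v \<le> K4 * P + e * norm w"
    proof -
      have "kk * norm v \<le> kk * (L * P) + kk * norm w"
        using mult_left_mono[OF nv, of kk] kk by (simp add: distrib_left)
      moreover have "kk * (L * P) \<le> (K4 / L) * (L * P)"
        using kkL P L by (intro mult_right_mono) auto
      moreover have "(K4 / L) * (L * P) = K4 * P" using L by (simp add: field_simps)
      moreover have "kk * norm w \<le> e * norm w" using kk_def by (intro mult_right_mono) auto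
      ultimately show ?thesis by linarith
    qed
    have A2: "N / G \<ge> K4 * P + K4 * P - C0"
    proof -
      have "N / G \<ge> (k * P / 2 - k1 / 4 - k2 / 4) / G"
        using NN G P_def by (simp add: divide_right_mono)
      moreover have "(k * P / 2 - k1 / 4 - k2 / 4) / G = K4 * P + K4 * P - C0"
        unfolding K4_def C0_def by (rule n2_aux[OF G])
      ultimately show ?thesis by simp
    qed
    have Qv': "Qf A v = N / G + Qf A w" using Qv alN by simp
    have "Qf A v \<ge> kk * norm v - (C0 + e / 4)" using Qv' Qw A1 A2 K4P by linarith
    moreover have "C0 + e / 4 = CC" by (simp add: CC_def C0_def)
    ultimately show ?thesis by simp
  qed
  show ?thesis using kk main by blast
qed




lemma CQbar_facts:
  assumes "c \<in> CQbar A c0"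
  shows "Qf A c \<le> 0" "Bf A c c0 < 0" "c \<in> CQ A c0 \<longleftrightarrow> Qf A c < 0"
  using assms by (auto simp: CQbar_def CQ_def SQ_def)

lemma SQ_int: assumes "c \<in> SQ A c0" obtains m where "c = int_vec m"
  using assms by (auto simp: SQ_def primitive_int_def)

lemma Bf_int_Ints: "Bf A (int_vec m) (int_vec n) \<in> \<int>"
  unfolding Bf_expand int_vec_def by (intro Ints_sum Ints_mult) auto

lemma discrete:
  assumes c: "c \<in> SQ A c0" and na: "Bf A c a \<notin> \<int>"
  shows "\<exists>d>0. \<forall>n. \<bar>Bf A c (int_vec n + a)\<bar> \<ge> d"
proof -
  obtain m where m: "c = int_vec m" using SQ_int[OF c] by blast
  define b where "b = Bf A c a"
  define d where "d = min (b - of_int \<lfloor>b\<rfloor>) (of_int \<lceil>b\<rceil> - b)"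
  have fl: "of_int \<lfloor>b\<rfloor> < b" using na b_def
    by (metis Ints_of_int floor_le_iff less_eq_real_def of_int_floor_le)
  have ce: "b < of_int \<lceil>b\<rceil>" using na b_def
    by (metis Ints_of_int le_of_int_ceiling less_eq_real_def)
  have d: "d > 0" using fl ce by (simp add: d_def)
  have "\<bar>Bf A c (int_vec n + a)\<bar> \<ge> d" for n
  proof -
    obtain j where j: "Bf A c (int_vec n) = of_int j"
      using Bf_int_Ints[of A m n] m by (auto elim: Ints_cases)
    have e: "Bf A c (int_vec n + a) = of_int j + b" by (simp add: Bf_add_right j b_def)
    show ?thesis
    proof (cases "of_int j + b \<ge> 0")
      case True
      hence "of_int (-j) \<le> b" by simp
      hence "-j \<le> \<lfloor>b\<rfloor>" by (simp add: le_floor_iff)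
      hence "of_int j + b \<ge> b - of_int \<lfloor>b\<rfloor>" by linarith
      thus ?thesis using True e d_def by simp
    next
      case False
      hence "b < of_int (-j)" by simp
      hence "\<lceil>b\<rceil> \<le> -j" by (simp add: ceiling_le_iff less_imp_le)
      hence "of_int j + b \<le> b - of_int \<lceil>b\<rceil>" by linarith
      thus ?thesis using False e d_def by simp
    qed
  qed
  with d show ?thesis by blast
qed

lemma rho_c_err:
  assumes c: "c \<in> CQbar A c0" and y: "Im \<tau> > 0"
  shows "\<bar>rho_c A c0 c v \<tau> - sgn (Bf A c v)\<bar> \<le>
           (if c \<in> CQ A c0 then exp (-pi * Im \<tau> * (Bf A c v)^2 / (- Qf A c)) else 0)"
proof (cases "c \<in> CQ A c0")
  case True
  hence Q: "Qf A c < 0" by (simp add: CQ_def)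
  define u where "u = Bf A c v / sqrt (- Qf A c) * sqrt (Im \<tau>)"
  have s1: "sqrt (- Qf A c) > 0" using Q by simp
  have s2: "sqrt (Im \<tau>) > 0" using y by simp
  have su: "sgn u = sgn (Bf A c v)" unfolding u_def using s1 s2
    by (simp add: sgn_mult sgn_divide)
  have u2: "u^2 = Im \<tau> * (Bf A c v)^2 / (- Qf A c)" unfolding u_def using Q y
    by (simp add: power_mult_distrib power_divide)
  have "\<bar>rho_c A c0 c v \<tau> - sgn (Bf A c v)\<bar> = \<bar>sgn u - Ef u\<bar>"
    using True su by (simp add: rho_c_def u_def abs_minus_commute)
  also have "\<dots> \<le> exp (-pi * u^2)" by (rule Ef_bound)
  also have "-pi * u^2 = -pi * Im \<tau> * (Bf A c v)^2 / (- Qf A c)" by (simp add: u2)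
  finally show ?thesis using True by simp
next
  case False
  then show ?thesis by (simp add: rho_c_def)
qed

lemma err_decay:
  assumes sym: "transpose A = A" and ty: "type_r1_1 A" and dA: "det A \<noteq> 0"
    and c: "Qf A c < 0" and y: "y > 0"
  shows "\<exists>K l. l > 0 \<and> (\<forall>v. exp (-pi * y * (Bf A c v)^2 / (- Qf A c)) * exp (-2 * pi * y * Qf A v)
             \<le> K * exp (-l * norm v))"
proof -
  obtain e where e: "e > 0" and P: "\<And>v. Pf A c v \<ge> e * (norm v)^2"
    using Pf_posdef[OF sym ty dA c] by blast
  define l where "l = 2 * pi * y * e"
  have l: "l > 0" using e y by (simp add: l_def)
  have "exp (-pi * y * (Bf A c v)^2 / (- Qf A c)) * exp (-2 * pi * y * Qf A v) \<le> exp (l / 4) * exp (-l * norm v)" for v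
  proof -
    have eq: "-pi * y * (Bf A c v)^2 / (- Qf A c) + -2 * pi * y * Qf A v = -2 * pi * y * Pf A c v"
      using c by (simp add: Pf_def field_simps)
    have "e * (norm v - 1/4) \<le> e * (norm v)^2" using e sq_ge_abs[of "norm v"] by (simp add: mult_left_mono)
    hence "e * (norm v - 1/4) \<le> Pf A c v" using P[of v] by linarith
    hence "2 * pi * y * (e * (norm v - 1/4)) \<le> 2 * pi * y * Pf A c v" using y by simp
    hence "-2 * pi * y * Pf A c v \<le> l / 4 + -l * norm v" by (simp add: l_def algebra_simps)
    hence i: "exp (-2 * pi * y * Pf A c v) \<le> exp (l / 4 + -l * norm v)" by (simp only: exp_le_cancel_iff)
    have "exp (-pi * y * (Bf A c v)^2 / (- Qf A c)) * exp (-2 * pi * y * Qf A v) = exp (-2 * pi * y * Pf A c v)"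
      by (simp only: exp_add[symmetric] eq)
    also have "\<dots> \<le> exp (l / 4 + -l * norm v)" by (rule i)
    also have "\<dots> = exp (l / 4) * exp (-l * norm v)" by (simp only: exp_add)
    finally show ?thesis .
  qed
  with l show ?thesis by blast
qed




lemma Im_Bc: "Im (Bc A (\<chi> i. of_int (n$i)) z) = Bf A (int_vec n) (\<chi> j. Im (z$j))"
  by (simp add: Bc_def Bf_expand int_vec_def Im_sum)

lemma norm_term:
  assumes sym: "transpose A = A" and y: "Im \<tau> > 0"
  shows "norm (theta_term A c0 c1 c2 z \<tau> n) =
    \<bar>rho A c0 c1 c2 (int_vec n + imquot z \<tau>) \<tau>\<bar> * exp (-2 * pi * Im \<tau> * Qf A (int_vec n + imquot z \<tau>))
      * exp (2 * pi * Im \<tau> * Qf A (imquot z \<tau>))"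
proof -
  define a where "a = imquot z \<tau>"
  have za: "(\<chi> j. Im (z$j)) = Im \<tau> *\<^sub>R a" using y by (simp add: a_def imquot_def vec_eq_iff)
  have ImB: "Im (Bc A (\<chi> i. of_int (n$i)) z) = Im \<tau> * Bf A (int_vec n) a"
    by (simp add: Im_Bc za Bf_scale_right)
  define w where "w = 2 * pi * \<i> * of_real (Qf A (int_vec n)) * \<tau> + 2 * pi * \<i> * Bc A (\<chi> i. of_int (n$i)) z"
  have Re: "Re w = -2 * pi * Im \<tau> * (Qf A (int_vec n) + Bf A (int_vec n) a)"
    unfolding w_def using ImB by (simp add: algebra_simps)
  have Qa: "Qf A (int_vec n) + Bf A (int_vec n) a = Qf A (int_vec n + a) - Qf A a"
    using Qf_add[OF sym, of "int_vec n" a] by simp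
  have "norm (theta_term A c0 c1 c2 z \<tau> n) = \<bar>rho A c0 c1 c2 (int_vec n + a) \<tau>\<bar> *
      exp (-2 * pi * Im \<tau> * (Qf A (int_vec n + a) - Qf A a))"
  proof -
    have "theta_term A c0 c1 c2 z \<tau> n = of_real (rho A c0 c1 c2 (int_vec n + a) \<tau>) * exp w"
      by (simp add: theta_term_def w_def a_def)
    hence "norm (theta_term A c0 c1 c2 z \<tau> n) = \<bar>rho A c0 c1 c2 (int_vec n + a) \<tau>\<bar> * exp (Re w)"
      by (simp add: norm_mult norm_exp_eq_Re)
    thus ?thesis by (simp only: Re Qa)
  qed
  also have "exp (-2 * pi * Im \<tau> * (Qf A (int_vec n + a) - Qf A a)) =
      exp (-2 * pi * Im \<tau> * Qf A (int_vec n + a)) * exp (2 * pi * Im \<tau> * Qf A a)"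
    by (simp add: exp_add[symmetric] algebra_simps)
  finally show ?thesis by (simp add: a_def mult.assoc)
qed

lemma sgn_diff_pq: assumes "sgn (p::real) \<noteq> sgn q" shows "p * q \<le> 0"
proof (rule ccontr)
  assume "\<not> p * q \<le> 0"
  hence "p * q > 0" by simp
  hence "(0 < p \<and> 0 < q) \<or> (p < 0 \<and> q < 0)" by (simp add: zero_less_mult_iff)
  thus False using assms by auto
qed

lemma sign_decay:
  assumes sym: "transpose A = A" and ty: "type_r1_1 A" and dA: "det A \<noteq> 0"
    and Q0: "Qf A c0 < 0" and c1: "c1 \<in> CQbar A c0" and c2: "c2 \<in> CQbar A c0"
    and y: "y > 0" and d: "d > 0"
    and d1: "c1 \<notin> CQ A c0 \<Longrightarrow> \<forall>v\<in>V. \<bar>Bf A c1 v\<bar> \<ge> d"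
    and d2: "c2 \<notin> CQ A c0 \<Longrightarrow> \<forall>v\<in>V. \<bar>Bf A c2 v\<bar> \<ge> d"
  shows "\<exists>K l. K \<ge> 0 \<and> l > 0 \<and> (\<forall>v\<in>V. sgn (Bf A c1 v) \<noteq> sgn (Bf A c2 v) \<longrightarrow>
            exp (-2 * pi * y * Qf A v) \<le> K * exp (-l * norm v))"
proof (cases "\<exists>t>0. c2 = t *\<^sub>R c1")
  case True
  then obtain t where t: "t > 0" "c2 = t *\<^sub>R c1" by blast
  have "sgn (Bf A c2 v) = sgn (Bf A c1 v)" for v
    using t by (simp add: Bf_scale_left sgn_mult)
  thus ?thesis by (intro exI[of _ 0] exI[of _ 1]) auto
next
  case False
  note f1 = CQbar_facts[OF c1] and f2 = CQbar_facts[OF c2]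
  have B: "Bf A c1 c2 < 0" using cone_B[OF sym ty dA Q0 f1(1) f1(2) f2(1) f2(2)] False by blast
  have dd1: "Qf A c1 < 0 \<or> (\<forall>v\<in>V. \<bar>Bf A c1 v\<bar> \<ge> d)" using d1 f1(3) by blast
  have dd2: "Qf A c2 < 0 \<or> (\<forall>v\<in>V. \<bar>Bf A c2 v\<bar> \<ge> d)" using d2 f2(3) by blast
  obtain k C where k: "k > 0" and R: "\<And>v. v \<in> V \<Longrightarrow> Bf A c1 v * Bf A c2 v \<le> 0 \<Longrightarrow> Qf A v \<ge> k * norm v - C"
    using region[OF sym ty dA f1(1) f2(1) B False d dd1 dd2] by blast
  have "exp (-2 * pi * y * Qf A v) \<le> exp (2 * pi * y * C) * exp (-(2 * pi * y * k) * norm v)"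
    if "v \<in> V" "sgn (Bf A c1 v) \<noteq> sgn (Bf A c2 v)" for v
  proof -
    have "Qf A v \<ge> k * norm v - C" using R that sgn_diff_pq by blast
    hence "2 * pi * y * (k * norm v - C) \<le> 2 * pi * y * Qf A v" using y by simp
    hence "-2 * pi * y * Qf A v \<le> 2 * pi * y * C + -(2 * pi * y * k) * norm v" by (simp add: algebra_simps)
    hence "exp (-2 * pi * y * Qf A v) \<le> exp (2 * pi * y * C + -(2 * pi * y * k) * norm v)"
      by (simp only: exp_le_cancel_iff)
    thus ?thesis by (simp only: exp_add)
  qed
  moreover have "2 * pi * y * k > 0" using y k by simp
  ultimately show ?thesis by (intro exI[of _ "exp (2 * pi * y * C)"] exI[of _ "2 * pi * y * k"]) auto
qed




lemma disc_opt:
  assumes c: "c \<in> CQbar A c0" and a: "a \<in> Rset A c0 c"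
  shows "\<exists>d>0. c \<notin> CQ A c0 \<longrightarrow> (\<forall>n. \<bar>Bf A c (int_vec n + a)\<bar> \<ge> d)"
proof (cases "c \<in> CQ A c0")
  case True then show ?thesis by (intro exI[of _ 1]) auto
next
  case False
  hence cs: "c \<in> SQ A c0" using c by (simp add: CQbar_def)
  have "Bf A c a \<notin> \<int>" using a False by (simp add: Rset_def)
  from discrete[OF cs this] show ?thesis by blast
qed

lemma err_opt:
  assumes sym: "transpose A = A" and ty: "type_r1_1 A" and dA: "det A \<noteq> 0"
    and c: "c \<in> CQbar A c0" and y: "y > 0"
  shows "\<exists>K l. l > 0 \<and> (\<forall>v. (if c \<in> CQ A c0 then exp (-pi * y * (Bf A c v)^2 / (- Qf A c)) else 0)
             * exp (-2 * pi * y * Qf A v) \<le> K * exp (-l * norm v))"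
proof (cases "c \<in> CQ A c0")
  case True
  hence "Qf A c < 0" by (simp add: CQ_def)
  from err_decay[OF sym ty dA this y] True show ?thesis by simp
next
  case False then show ?thesis by (intro exI[of _ 0] exI[of _ 1]) simp
qed

lemma sgn_diff_le2: "\<bar>sgn (p::real) - sgn q\<bar> \<le> 2"
  by (simp add: sgn_real_def)

theorem proposition2p4:
  fixes A :: "int^'n^'n" and c0 c1 c2 :: "real^'n" and z :: "complex^'n" and \<tau> :: complex
  assumes "transpose A = A"
    and "det A \<noteq> 0"
    and "type_r1_1 A"
    and "Qf A c0 < 0"
    and "c1 \<in> CQbar A c0" and "c2 \<in> CQbar A c0"
    and "(z, \<tau>) \<in> Dset A c0 c1 \<inter> Dset A c0 c2"
  shows "(\<lambda>n. norm (theta_term A c0 c1 c2 z \<tau> n)) summable_on UNIV"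
proof -
  note sym = assms(1) and dA = assms(2) and ty = assms(3) and Q0 = assms(4)
    and c1 = assms(5) and c2 = assms(6)
  define y where "y = Im \<tau>"
  define a where "a = imquot z \<tau>"
  have y: "y > 0" and a1: "a \<in> Rset A c0 c1" and a2: "a \<in> Rset A c0 c2"
    using assms(7) by (auto simp: Dset_def y_def a_def)
  define V where "V = range (\<lambda>n. int_vec n + a)"
  obtain d1 where d1: "d1 > 0" "c1 \<notin> CQ A c0 \<Longrightarrow> \<forall>n. \<bar>Bf A c1 (int_vec n + a)\<bar> \<ge> d1"
    using disc_opt[OF c1 a1] by blast
  obtain d2 where d2: "d2 > 0" "c2 \<notin> CQ A c0 \<Longrightarrow> \<forall>n. \<bar>Bf A c2 (int_vec n + a)\<bar> \<ge> d2"
    using disc_opt[OF c2 a2] by blast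
  define d where "d = min d1 d2"
  have d: "d > 0" using d1 d2 d_def by simp
  have dd1: "\<forall>v\<in>V. \<bar>Bf A c1 v\<bar> \<ge> d" if h: "c1 \<notin> CQ A c0"
  proof
    fix v assume "v \<in> V"
    then obtain n where n: "v = int_vec n + a" by (auto simp: V_def)
    have "d \<le> d1" by (simp add: d_def)
    also have "d1 \<le> \<bar>Bf A c1 v\<bar>" using d1(2)[OF h] n by simp
    finally show "d \<le> \<bar>Bf A c1 v\<bar>" .
  qed
  have dd2: "\<forall>v\<in>V. \<bar>Bf A c2 v\<bar> \<ge> d" if h: "c2 \<notin> CQ A c0"
  proof
    fix v assume "v \<in> V"
    then obtain n where n: "v = int_vec n + a" by (auto simp: V_def)
    have "d \<le> d2" by (simp add: d_def)
    also have "d2 \<le> \<bar>Bf A c2 v\<bar>" using d2(2)[OF h] n by simp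
    finally show "d \<le> \<bar>Bf A c2 v\<bar>" .
  qed
  obtain K0 l0 where K0: "K0 \<ge> 0" and l0: "l0 > 0"
    and S: "\<And>v. v \<in> V \<Longrightarrow> sgn (Bf A c1 v) \<noteq> sgn (Bf A c2 v) \<Longrightarrow>
            exp (-2 * pi * y * Qf A v) \<le> K0 * exp (-l0 * norm v)"
    using sign_decay[OF sym ty dA Q0 c1 c2 y d dd1 dd2] by blast
  define E1 where "E1 = (\<lambda>v. if c1 \<in> CQ A c0 then exp (-pi * y * (Bf A c1 v)^2 / (- Qf A c1)) else 0)"
  define E2 where "E2 = (\<lambda>v. if c2 \<in> CQ A c0 then exp (-pi * y * (Bf A c2 v)^2 / (- Qf A c2)) else 0)"
  obtain K1 l1 where l1: "l1 > 0" and E1b: "\<And>v. E1 v * exp (-2 * pi * y * Qf A v) \<le> K1 * exp (-l1 * norm v)"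
    using err_opt[OF sym ty dA c1 y] unfolding E1_def by blast
  obtain K2 l2 where l2: "l2 > 0" and E2b: "\<And>v. E2 v * exp (-2 * pi * y * Qf A v) \<le> K2 * exp (-l2 * norm v)"
    using err_opt[OF sym ty dA c2 y] unfolding E2_def by blast
  define F where "F = (\<lambda>n. exp (2 * pi * y * Qf A a) *
      (2 * K0 * exp (-l0 * norm (int_vec n + a)) + K1 * exp (-l1 * norm (int_vec n + a))
        + K2 * exp (-l2 * norm (int_vec n + a))))"
  have Fs: "F summable_on UNIV"
    unfolding F_def
    by (intro summable_on_cmult_right summable_on_add sum_exp_lattice l0 l1 l2)
  have bound: "norm (theta_term A c0 c1 c2 z \<tau> n) \<le> F n" for n
  proof -
    define v where "v = int_vec n + a"
    have vV: "v \<in> V" by (simp add: V_def v_def)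
    define X where "X = exp (-2 * pi * y * Qf A v)"
    have X: "X > 0" by (simp add: X_def)
    have r1: "\<bar>rho_c A c0 c1 v \<tau> - sgn (Bf A c1 v)\<bar> \<le> E1 v"
      unfolding E1_def y_def by (rule rho_c_err[OF c1]) (use y y_def in simp)
    have r2: "\<bar>rho_c A c0 c2 v \<tau> - sgn (Bf A c2 v)\<bar> \<le> E2 v"
      unfolding E2_def y_def by (rule rho_c_err[OF c2]) (use y y_def in simp)
    have rho: "\<bar>rho A c0 c1 c2 v \<tau>\<bar> \<le> \<bar>sgn (Bf A c1 v) - sgn (Bf A c2 v)\<bar> + E1 v + E2 v"
    proof -
      have "rho A c0 c1 c2 v \<tau> = (rho_c A c0 c1 v \<tau> - sgn (Bf A c1 v)) - (rho_c A c0 c2 v \<tau> - sgn (Bf A c2 v))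
          + (sgn (Bf A c1 v) - sgn (Bf A c2 v))" by (simp add: rho_def)
      thus ?thesis using r1 r2 by linarith
    qed
    have sX: "\<bar>sgn (Bf A c1 v) - sgn (Bf A c2 v)\<bar> * X \<le> 2 * K0 * exp (-l0 * norm v)"
    proof (cases "sgn (Bf A c1 v) = sgn (Bf A c2 v)")
      case True then show ?thesis using K0 by simp
    next
      case False
      have "X \<le> K0 * exp (-l0 * norm v)" using S[OF vV False] by (simp add: X_def)
      hence "\<bar>sgn (Bf A c1 v) - sgn (Bf A c2 v)\<bar> * X \<le> 2 * (K0 * exp (-l0 * norm v))"
        using sgn_diff_le2 X by (intro mult_mono) auto
      thus ?thesis by (simp add: mult.assoc)
    qed
    have "\<bar>rho A c0 c1 c2 v \<tau>\<bar> * X \<le> (\<bar>sgn (Bf A c1 v) - sgn (Bf A c2 v)\<bar> + E1 v + E2 v) * X"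
      using rho X by (simp add: mult_right_mono)
    also have "\<dots> = \<bar>sgn (Bf A c1 v) - sgn (Bf A c2 v)\<bar> * X + E1 v * X + E2 v * X"
      by (simp add: algebra_simps)
    also have "\<dots> \<le> 2 * K0 * exp (-l0 * norm v) + K1 * exp (-l1 * norm v) + K2 * exp (-l2 * norm v)"
      using sX E1b[of v] E2b[of v] unfolding X_def by linarith
    finally have main: "\<bar>rho A c0 c1 c2 v \<tau>\<bar> * X \<le>
        2 * K0 * exp (-l0 * norm v) + K1 * exp (-l1 * norm v) + K2 * exp (-l2 * norm v)" .
    have "norm (theta_term A c0 c1 c2 z \<tau> n) = \<bar>rho A c0 c1 c2 v \<tau>\<bar> * X * exp (2 * pi * y * Qf A a)"
      using norm_term[OF sym, of \<tau> c0 c1 c2 z n] y by (simp add: v_def X_def y_def a_def)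
    also have "\<dots> \<le> (2 * K0 * exp (-l0 * norm v) + K1 * exp (-l1 * norm v) + K2 * exp (-l2 * norm v))
        * exp (2 * pi * y * Qf A a)"
      using main by (intro mult_right_mono) auto
    also have "\<dots> = F n" by (simp add: F_def v_def mult.commute)
    finally show ?thesis .
  qed
  show ?thesis
    by (rule summable_on_comparison_test[OF Fs bound]) simp
qed


end
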